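(* Let $\rho$ be a valid state of an $(m,n)$-composite, and consider a sub-collection consisting of $m'\le m$ of its dits and $n'\le n$ of its anti-dits (an $(m',n')$-composite). Let $P$ be any operator belonging to a valid measurement on this $(m',n')$-composite. Then the operator $\sigma=\mathrm{Tr}_{\text{measured}}\big[(P\otimes I)\rho\big]$ on the remaining $m-m'$ dits and $n-n'$ anti-dits (where the partial trace is over the measured $m'$ dits and $n'$ anti-dits and $I$ is the identity on the remaining systems) is either zero or a positive multiple of a valid state of the remaining $(m-m',n-n')$-composite. In particular (taking $P=I$), every marginal of a valid state is a valid state.
   Context: Fix an integer $d\ge 2$. A dit $D$ and an anti-dit $A$ are each associated with $\mathbb C^d$ with computational orthonormal basis $\{|0\rangle,\dots,|d-1\rangle\}$; $\oplus$ denotes addition modulo $d$. An $(m,n)$-composite consists of $m$ dits $D_1,\dots,D_m$ and $n$ anti-dits $A_1,\dots,A_n$, with Hilbert space $(\mathbb C^d)^{\otimes m}\otimes(\mathbb C^d)^{\otimes n}$. For a dit $D_i$, an anti-dit $A_j$ and $k\in\{0,\dots,d-1\}$, let $\Pi_k^{D_iA_j}$ be the orthogonal projector onto $\mathrm{span}\{|s\rangle_{D_i}|s\oplus k\rangle_{A_j}: s=0,\dots,d-1\}$. Pure states: if $m\le n$, a pure state of the $(m,n)$-composite is a unit vector of the form $(U\otimes W)(|\Psi'\rangle\otimes|\mathbf r\rangle)$, where $U$ is a unitary permuting the tensor factors of the $m$ dits, $W$ a unitary permuting the tensor factors of the $n$ anti-dits, $|\mathbf r\rangle$ a computational-basis product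 vector of anti-dits $A_{m+1},\dots,A_n$, and $|\Psi'\rangle$ a unit vector of $D_1\cdots D_mA_1\cdots A_m$ with $(\Pi_{k_1}^{D_1A_1}\otimes\cdots\otimes\Pi_{k_m}^{D_mA_m})|\Psi'\rangle=|\Psi'\rangle$ for some $k_1,\dots,k_m$. If $m\ge n$, the same with roles of dits and anti-dits exchanged (a computational-basis product vector on the $m-n$ extra dits). The $(0,0)$-composite is the trivial system $\mathbb C$. Valid states are density matrices that are finite convex combinations of projectors onto pure states. A valid measurement on an $(m,n)$-composite is a POVM $\{P_i\}$ ($P_i\ge 0$, $\sum_iP_i=I$) in which each $P_i$ is a linear combination with nonnegative coefficients of projectors $|\Psi\rangle\langle\Psi|$ onto pure states of that composite; outcome probabilities are $\mathrm{Tr}[P_i\rho]$. *)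

theory Defs
  imports Complex_Main "HOL-Library.FuncSet"
begin

text \<open>A composite is described by a finite set DS of dit labels and a finite set AS of
anti-dit labels. A computational basis configuration is a pair (f,g) of extensional
functions giving the value in {0..d-1} of each dit / anti-dit. Vectors are complex
functions on configurations (zero outside the basis); operators are matrices indexed
by configurations (entry X a b = matrix element of |a> ... <b|).\<close>

type_synonym cfg = "(nat \<Rightarrow> nat) \<times> (nat \<Rightarrow> nat)"
type_synonym vec = "cfg \<Rightarrow> complex"
type_synonym op = "cfg \<Rightarrow> cfg \<Rightarrow> complex"

definition basis :: "nat \<Rightarrow> nat set \<Rightarrow> nat set \<Rightarrow> cfg set" where
  "basis d DS AS = (PiE DS (\<lambda>_. {..<d})) \<times> (PiE AS (\<lambda>_. {..<d}))"

definition in_space :: "nat \<Rightarrow> nat set \<Rightarrow> nat set \<Rightarrow> vec \<Rightarrow> bool" where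
  "in_space d DS AS \<psi> \<longleftrightarrow> (\<forall>c. c \<notin> basis d DS AS \<longrightarrow> \<psi> c = 0)"

definition unit_vec :: "nat \<Rightarrow> nat set \<Rightarrow> nat set \<Rightarrow> vec \<Rightarrow> bool" where
  "unit_vec d DS AS \<psi> \<longleftrightarrow> in_space d DS AS \<psi> \<and> (\<Sum>c\<in>basis d DS AS. (cmod (\<psi> c))\<^sup>2) = 1"

text \<open>Case m \<le> n: dit i is paired with anti-dit \<pi> i (the permutations U, W),
the vector lies in the range of the tensor product of the projectors
Pi_{k i}^{D_i A_{\<pi> i}}, and the unpaired anti-dits are in computational basis state r.\<close>
definition pure_DA :: "nat \<Rightarrow> nat set \<Rightarrow> nat set \<Rightarrow> vec \<Rightarrow> bool" where
  "pure_DA d DS AS \<psi> \<longleftrightarrow> (\<exists>\<pi> k r. inj_on \<pi> DS \<and> \<pi> ` DS \<subseteq> AS \<and> (\<forall>i\<in>DS. k i < d)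
     \<and> (\<forall>j\<in>AS - \<pi> ` DS. r j < d)
     \<and> (\<forall>f g. (f, g) \<in> basis d DS AS \<and> \<psi> (f, g) \<noteq> 0 \<longrightarrow>
            (\<forall>i\<in>DS. g (\<pi> i) = (f i + k i) mod d) \<and> (\<forall>j\<in>AS - \<pi> ` DS. g j = r j)))"

text \<open>Case m \<ge> n: anti-dit j is paired with dit \<pi> j; unpaired dits in basis state r.\<close>
definition pure_AD :: "nat \<Rightarrow> nat set \<Rightarrow> nat set \<Rightarrow> vec \<Rightarrow> bool" where
  "pure_AD d DS AS \<psi> \<longleftrightarrow> (\<exists>\<pi> k r. inj_on \<pi> AS \<and> \<pi> ` AS \<subseteq> DS \<and> (\<forall>j\<in>AS. k j < d)
     \<and> (\<forall>i\<in>DS - \<pi> ` AS. r i < d)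
     \<and> (\<forall>f g. (f, g) \<in> basis d DS AS \<and> \<psi> (f, g) \<noteq> 0 \<longrightarrow>
            (\<forall>j\<in>AS. g j = (f (\<pi> j) + k j) mod d) \<and> (\<forall>i\<in>DS - \<pi> ` AS. f i = r i)))"

definition pure_state :: "nat \<Rightarrow> nat set \<Rightarrow> nat set \<Rightarrow> vec \<Rightarrow> bool" where
  "pure_state d DS AS \<psi> \<longleftrightarrow> unit_vec d DS AS \<psi> \<and>
     ((card DS \<le> card AS \<and> pure_DA d DS AS \<psi>) \<or> (card AS \<le> card DS \<and> pure_AD d DS AS \<psi>))"

definition proj :: "vec \<Rightarrow> op" where
  "proj \<psi> = (\<lambda>a b. \<psi> a * cnj (\<psi> b))"

definition valid_state :: "nat \<Rightarrow> nat set \<Rightarrow> nat set \<Rightarrow> op \<Rightarrow> bool" where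
  "valid_state d DS AS \<rho> \<longleftrightarrow> (\<exists>(N::nat) p \<psi>. (\<forall>i<N. p i \<ge> (0::real) \<and> pure_state d DS AS (\<psi> i))
      \<and> (\<Sum>i<N. p i) = 1 \<and> \<rho> = (\<lambda>a b. \<Sum>i<N. complex_of_real (p i) * proj (\<psi> i) a b))"

definition nonneg_comb_pure :: "nat \<Rightarrow> nat set \<Rightarrow> nat set \<Rightarrow> op \<Rightarrow> bool" where
  "nonneg_comb_pure d DS AS P \<longleftrightarrow> (\<exists>(N::nat) c \<psi>. (\<forall>i<N. c i \<ge> (0::real) \<and> pure_state d DS AS (\<psi> i))
      \<and> P = (\<lambda>a b. \<Sum>i<N. complex_of_real (c i) * proj (\<psi> i) a b))"

definition psd :: "nat \<Rightarrow> nat set \<Rightarrow> nat set \<Rightarrow> op \<Rightarrow> bool" where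
  "psd d DS AS P \<longleftrightarrow> (\<forall>v. in_space d DS AS v \<longrightarrow>
     (let q = (\<Sum>a\<in>basis d DS AS. \<Sum>b\<in>basis d DS AS. cnj (v a) * P a b * v b)
      in Im q = 0 \<and> Re q \<ge> 0))"

definition id_op :: "nat \<Rightarrow> nat set \<Rightarrow> nat set \<Rightarrow> op" where
  "id_op d DS AS = (\<lambda>a b. if a \<in> basis d DS AS \<and> a = b then 1 else 0)"

definition valid_measurement :: "nat \<Rightarrow> nat set \<Rightarrow> nat set \<Rightarrow> op list \<Rightarrow> bool" where
  "valid_measurement d DS AS Ps \<longleftrightarrow>
     (\<forall>P\<in>set Ps. psd d DS AS P \<and> nonneg_comb_pure d DS AS P)
     \<and> (\<lambda>a b. \<Sum>i<length Ps. (Ps ! i) a b) = id_op d DS AS"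

definition join :: "nat set \<Rightarrow> nat set \<Rightarrow> cfg \<Rightarrow> cfg \<Rightarrow> cfg" where
  "join DS' AS' x y = ((\<lambda>i. if i \<in> DS' then fst x i else fst y i),
                      (\<lambda>j. if j \<in> AS' then snd x j else snd y j))"

text \<open>sigma = Tr_measured[(P \<otimes> I) rho]:
 sigma(r,r') = sum_{a,b} P(a,b) rho((b,r),(a,r')).\<close>
definition ptrace_op :: "nat \<Rightarrow> nat set \<Rightarrow> nat set \<Rightarrow> nat set \<Rightarrow> nat set \<Rightarrow> op \<Rightarrow> op \<Rightarrow> op" where
  "ptrace_op d DS AS DS' AS' P \<rho> = (\<lambda>r r'.
     if r \<in> basis d (DS - DS') (AS - AS') \<and> r' \<in> basis d (DS - DS') (AS - AS') then
       (\<Sum>a\<in>basis d DS' AS'. \<Sum>b\<in>basis d DS' AS'. P a b * \<rho> (join DS' AS' b r) (join DS' AS' a r'))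
     else 0)"

end

theory Submission
  imports Defs
begin


definition gsat :: "nat \<Rightarrow> 'a set \<Rightarrow> 'a set \<Rightarrow> ('a\<Rightarrow>'a) \<Rightarrow> ('a\<Rightarrow>int) \<Rightarrow> ('a\<Rightarrow>int) \<Rightarrow> ('a\<Rightarrow>int) \<Rightarrow> bool" where
 "gsat d V Mt N Of Fx w \<longleftrightarrow> (\<forall>x\<in>Mt. int d dvd (w (N x) - w x - Of x)) \<and> (\<forall>x\<in>V-Mt. int d dvd (w x - Fx x))"

definition gstruct :: "('a \<Rightarrow> bool) \<Rightarrow> 'a set \<Rightarrow> 'a set \<Rightarrow> ('a\<Rightarrow>'a) \<Rightarrow> bool" where
 "gstruct tp V Mt N \<longleftrightarrow> Mt \<subseteq> V \<and> (\<forall>x\<in>Mt. N x \<in> Mt \<and> N (N x) = x \<and> tp (N x) \<noteq> tp x)"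

locale wk =
  fixes V V' :: "'a set" and tp :: "'a \<Rightarrow> bool" and Mt1 Mt2 :: "'a set" and N1 N2 :: "'a \<Rightarrow> 'a"
  assumes fin: "finite V" and sub: "V' \<subseteq> V" and g1: "gstruct tp V Mt1 N1" and g2: "gstruct tp V' Mt2 N2"
begin

definition NN :: "nat \<Rightarrow> 'a \<Rightarrow> 'a" where "NN i = (if even i then N1 else N2)"
definition MM :: "nat \<Rightarrow> 'a set" where "MM i = (if even i then Mt1 else Mt2)"

fun z :: "'a \<Rightarrow> nat \<Rightarrow> 'a" where
  "z x 0 = x" | "z x (Suc i) = NN i (z x i)"

definition cont :: "'a \<Rightarrow> nat \<Rightarrow> bool" where
  "cont x i \<longleftrightarrow> z x i \<in> MM i \<and> (i = 0 \<or> z x i \<in> V')"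

lemma MM_V: "MM i \<subseteq> V"
  using g1 g2 sub unfolding MM_def gstruct_def by auto

lemma MM_par: "even i = even j \<Longrightarrow> MM i = MM j" "even i = even j \<Longrightarrow> NN i = NN j"
  unfolding MM_def NN_def by auto

lemma NN_props: "y \<in> MM i \<Longrightarrow> NN i y \<in> MM i \<and> NN i (NN i y) = y \<and> tp (NN i y) \<noteq> tp y"
  using g1 g2 unfolding MM_def NN_def gstruct_def by (auto split: if_splits)

lemma step: "cont x i \<Longrightarrow> z x (Suc i) \<in> MM i \<and> NN i (z x (Suc i)) = z x i \<and> tp (z x (Suc i)) \<noteq> tp (z x i)"
  unfolding cont_def using NN_props by auto

lemma alive_V: "x \<in> V \<Longrightarrow> \<forall>i<n. cont x i \<Longrightarrow> z x n \<in> V"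
proof (cases n)
  case (Suc m) then show "x \<in> V \<Longrightarrow> \<forall>i<n. cont x i \<Longrightarrow> z x n \<in> V"
    using step[of x m] MM_V by auto
qed auto

lemma bk: "\<forall>i<n. cont x i \<Longrightarrow> 1 \<le> i \<Longrightarrow> i \<le> n \<Longrightarrow> NN (i-1) (z x i) = z x (i-1)"
  using step[of x "i-1"] by (cases i) auto

lemma even_V': "\<forall>i<n. cont x i \<Longrightarrow> 1 \<le> j \<Longrightarrow> j \<le> n \<Longrightarrow> even j \<Longrightarrow> z x j \<in> V'"
  using step[of x "j-1"] g2 unfolding MM_def gstruct_def by (cases j) auto

lemma distinct_walk:
  assumes x: "x \<in> V - V'" and A: "\<forall>i<n. cont x i"
  shows "j \<le> n \<Longrightarrow> i < j \<Longrightarrow> z x i \<noteq> z x j"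
proof (induction j arbitrary: i rule: less_induct)
  case (less j)
  have jn: "j \<le> n" and ij: "i < j" using less.prems by auto
  have IH: "\<And>j' i'. j' < j \<Longrightarrow> i' < j' \<Longrightarrow> z x i' \<noteq> z x j'" using less.IH jn by auto
  have bj: "NN (j-1) (z x j) = z x (j-1)" using bk[OF A, of j] jn ij by simp
  show ?case
  proof
    assume eq: "z x i = z x j"
    show False
    proof (cases "j = Suc i")
      case True
      have "cont x i" using A ij jn by simp
      from step[OF this] True eq show False by metis
    next
      case jne: False
      show False
      proof (cases "i = 0")
        case True
        show False
        proof (cases "even j")
          case True
          have "z x j \<in> V'" using even_V'[OF A, of j] True jn ij by simp
          moreover have "z x i = x" using \<open>i=0\<close> by simp
          ultimately show False using eq x by auto
        next
          case False
          obtain k where jk: "j = 2*k+1" using False oddE by blast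
          have j3: "j \<ge> 3" using jk jne \<open>i=0\<close> by (cases k) auto
          have p: "NN (j-1) = NN 0" using MM_par(2)[of "j-1" 0] jk by simp
          have "z x (j-1) = NN (j-1) (z x j)" using bj by simp
          also have "\<dots> = NN 0 (z x 0)" using eq \<open>i=0\<close> p by metis
          also have "\<dots> = z x 1" by simp
          finally have "z x 1 = z x (j-1)" by simp
          moreover have "j - 1 < j" "1 < j - 1" using j3 by auto
          ultimately show False using IH by blast
        qed
      next
        case False
        have bi: "NN (i-1) (z x i) = z x (i-1)" using bk[OF A, of i] jn ij False by simp
        show False
        proof (cases "even i = even j")
          case True
          have p: "NN (i-1) = NN (j-1)" using MM_par(2)[of "i-1" "j-1"] True False ij by simp
          have "z x (i-1) = z x (j-1)" using bi bj eq p by metis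
          moreover have "j - 1 < j" "i - 1 < j - 1" using False ij by auto
          ultimately show False using IH by blast
        next
          case par: False
          have "odd (j - i)" using par ij by auto
          then obtain k where jk: "j - i = 2*k+1" using oddE by blast
          have j3: "j \<ge> i + 3" using jk jne ij by (cases k) auto
          have "j - 1 = i + 2*k" using jk ij by simp
          then have p: "NN i = NN (j-1)" using MM_par(2)[of i "j-1"] by simp
          have "z x (Suc i) = NN i (z x i)" by simp
          also have "\<dots> = z x (j-1)" using eq p bj by metis
          finally have "z x (Suc i) = z x (j-1)" .
          moreover have "j - 1 < j" "Suc i < j - 1" using j3 by auto
          ultimately show False using IH by blast
        qed
      qed
    qed
  qed
qed

lemma terminates:
  assumes x: "x \<in> V - V'"
  shows "\<exists>n. \<not> cont x n"
proof (rule ccontr)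
  assume "\<not> ?thesis"
  then have A: "\<forall>i<card V + 1. cont x i" by auto
  have "inj_on (z x) {..card V}"
    using distinct_walk[OF x A] unfolding inj_on_def
    by (metis Suc_eq_plus1 atMost_iff le_SucI linorder_neqE_nat)
  moreover have "z x ` {..card V} \<subseteq> V"
    using alive_V A x by auto
  ultimately have "card {..card V} \<le> card V"
    using card_inj_on_le fin by blast
  then show False by simp
qed

definition len :: "'a \<Rightarrow> nat" where "len x = (LEAST n. \<not> cont x n)"

lemma len_props:
  assumes "x \<in> V - V'"
  shows "\<forall>i<len x. cont x i" "\<not> cont x (len x)"
  using terminates[OF assms] unfolding len_def
  by (metis not_less_Least, metis LeastI)

lemma len_eq: "\<forall>i<n. cont x i \<Longrightarrow> \<not> cont x n \<Longrightarrow> len x = n"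
  unfolding len_def by (rule Least_equality) (auto simp: not_less[symmetric])

lemma tp_par: "\<forall>i<n. cont x i \<Longrightarrow> tp (z x n) = (if even n then tp x else \<not> tp x)"
proof (induction n)
  case (Suc n)
  then have "cont x n" by simp
  from step[OF this] Suc show ?case by auto
qed simp

definition S :: "('a \<Rightarrow> int) \<Rightarrow> ('a \<Rightarrow> int) \<Rightarrow> 'a \<Rightarrow> nat \<Rightarrow> int" where
  "S O1 O2 x n = (\<Sum>i<n. (if even i then O1 else O2) (z x i))"

lemma sum_rel:
  assumes s1: "gsat d V Mt1 N1 O1 F1 w" and s2: "gsat d V' Mt2 N2 O2 F2 w"
  shows "\<forall>i<n. cont x i \<Longrightarrow> int d dvd (w (z x n) - w x - S O1 O2 x n)"
proof (induction n)
  case 0 then show ?case by (simp add: S_def)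
next
  case (Suc n)
  then have c: "cont x n" and ih: "int d dvd (w (z x n) - w x - S O1 O2 x n)" by auto
  have "z x n \<in> MM n" using c cont_def by auto
  then have "int d dvd (w (NN n (z x n)) - w (z x n) - (if even n then O1 else O2) (z x n))"
    using s1 s2 unfolding gsat_def MM_def NN_def by (auto split: if_splits)
  from dvd_add[OF ih this] show ?case by (simp add: S_def algebra_simps)
qed

definition Mt3 :: "'a set" where "Mt3 = {x \<in> V - V'. 0 < len x \<and> z x (len x) \<notin> V'}"
definition N3 :: "'a \<Rightarrow> 'a" where "N3 x = z x (len x)"

lemma odd_len: assumes "x \<in> Mt3" shows "odd (len x)"
proof
  assume e: "even (len x)"
  have x: "x \<in> V - V'" and l: "0 < len x" and zn: "z x (len x) \<notin> V'" using assms Mt3_def by auto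
  show False using even_V'[OF len_props(1)[OF x], of "len x"] e l zn by simp
qed

lemma rev_walk:
  assumes xm: "x \<in> Mt3"
  shows "i \<le> len x \<Longrightarrow> z (N3 x) i = z x (len x - i)"
proof (induction i)
  case 0 then show ?case by (simp add: N3_def)
next
  case (Suc i)
  have x: "x \<in> V - V'" using xm Mt3_def by auto
  have o: "odd (len x)" using odd_len[OF xm] .
  define j where "j = len x - Suc i"
  have lj: "len x - i = Suc j" using Suc.prems j_def by simp
  have cj: "cont x j" using len_props(1)[OF x] j_def Suc.prems by simp
  have par: "even j = even i" using o Suc.prems j_def by (auto simp: even_diff_nat)
  have "z (N3 x) (Suc i) = NN i (z x (Suc j))" using Suc lj by simp
  also have "\<dots> = NN j (z x (Suc j))" using MM_par(2)[OF par] by simp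
  also have "\<dots> = z x j" using step[OF cj] by simp
  finally show ?case using j_def by simp
qed

lemma Mt3_props:
  assumes xm: "x \<in> Mt3"
  shows "N3 x \<in> Mt3 \<and> N3 (N3 x) = x \<and> tp (N3 x) \<noteq> tp x"
proof -
  have x: "x \<in> V - V'" and l: "0 < len x" and zn: "z x (len x) \<notin> V'" using xm Mt3_def by auto
  have o: "odd (len x)" using odd_len[OF xm] .
  define n where "n = len x"
  define y where "y = N3 x"
  have A: "\<forall>i<n. cont x i" using len_props(1)[OF x] n_def by simp
  have zy: "\<And>i. i \<le> n \<Longrightarrow> z y i = z x (n - i)" using rev_walk[OF xm] y_def n_def by simp
  have cy: "\<forall>i<n. cont y i"
  proof (intro allI impI)
    fix i assume i: "i < n"
    define j where "j = n - Suc i"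
    have nj: "n - i = Suc j" using i j_def by simp
    have par: "even j = even i" using o i j_def n_def by (auto simp: even_diff_nat)
    have "z y i = z x (Suc j)" using zy[of i] i nj by simp
    moreover have "z x (Suc j) \<in> MM j" using step[of x j] A j_def i by simp
    moreover have "i = 0 \<or> z x (Suc j) \<in> V'"
    proof (cases "i = 0")
      case False
      then have "Suc j < n" using nj i by simp
      then show ?thesis using A unfolding cont_def by auto
    qed simp
    ultimately show "cont y i" unfolding cont_def using MM_par(1)[OF par] by simp
  qed
  have ny: "\<not> cont y n" using zy[of n] x l n_def unfolding cont_def by simp
  have ly: "len y = n" using len_eq[OF cy ny] .
  have yV: "y \<in> V" using alive_V[of x n] x A y_def N3_def n_def by simp
  have yV': "y \<notin> V'" using zn y_def N3_def by simp
  have "N3 y = x" using zy[of n] ly N3_def by simp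
  moreover have "y \<in> Mt3" using yV yV' ly l n_def \<open>N3 y = x\<close> x unfolding Mt3_def N3_def by auto
  moreover have "tp y \<noteq> tp x" using tp_par[OF A] o y_def N3_def n_def by simp
  ultimately show ?thesis using y_def by simp
qed

lemma walk_main:
  "\<exists>Mt N Of Fx. gstruct tp (V - V') Mt N \<and>
     (\<forall>w. gsat d V Mt1 N1 O1 F1 w \<and> gsat d V' Mt2 N2 O2 F2 w \<longrightarrow> gsat d (V - V') Mt N Of Fx w)"
proof (intro exI conjI allI impI)
  show "gstruct tp (V - V') Mt3 N3" unfolding gstruct_def using Mt3_props by (auto simp: Mt3_def)
  fix w assume "gsat d V Mt1 N1 O1 F1 w \<and> gsat d V' Mt2 N2 O2 F2 w"
  then have s1: "gsat d V Mt1 N1 O1 F1 w" and s2: "gsat d V' Mt2 N2 O2 F2 w" by auto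
  let ?Of = "\<lambda>x. S O1 O2 x (len x)"
  let ?Fx = "\<lambda>x. (if even (len x) then F1 else F2) (z x (len x)) - S O1 O2 x (len x)"
  show "gsat d (V - V') Mt3 N3 ?Of ?Fx w"
    unfolding gsat_def
  proof (intro conjI ballI)
    fix x assume "x \<in> Mt3"
    then have x: "x \<in> V - V'" unfolding Mt3_def by auto
    show "int d dvd (w (N3 x) - w x - ?Of x)"
      using sum_rel[OF s1 s2 len_props(1)[OF x]] N3_def by simp
  next
    fix x assume xx: "x \<in> V - V' - Mt3"
    then have x: "x \<in> V - V'" by auto
    define n where "n = len x"
    have A: "\<forall>i<n. cont x i" and nc: "\<not> cont x n" using len_props[OF x] n_def by auto
    have r: "int d dvd (w (z x n) - w x - S O1 O2 x n)" using sum_rel[OF s1 s2 A] .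
    have alt: "n = 0 \<or> z x n \<in> V'" using xx n_def unfolding Mt3_def by auto
    have zV: "z x n \<in> V" using alive_V[OF _ A] x by simp
    have nm: "z x n \<notin> MM n" using nc alt cont_def by auto
    have f: "int d dvd (w (z x n) - (if even n then F1 else F2) (z x n))"
    proof (cases "even n")
      case True
      then show ?thesis using s1 zV nm unfolding gsat_def MM_def by auto
    next
      case False
      then have "n \<noteq> 0" using odd_pos by fastforce
      then have "z x n \<in> V'" using alt by simp
      then show ?thesis using s2 False nm unfolding gsat_def MM_def by auto
    qed
    have e: "w x - ?Fx x = (w (z x n) - (if even n then F1 else F2) (z x n)) - (w (z x n) - w x - S O1 O2 x n)"
      using n_def by simp
    show "int d dvd (w x - ?Fx x)" unfolding e by (rule dvd_diff[OF f r])
  qed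
qed

end


definition nodes :: "nat set \<Rightarrow> nat set \<Rightarrow> (nat + nat) set" where
  "nodes DS AS = Inl ` DS \<union> Inr ` AS"

definition val :: "cfg \<Rightarrow> nat + nat \<Rightarrow> int" where
  "val c x = (case x of Inl i \<Rightarrow> int (fst c i) | Inr j \<Rightarrow> int (snd c j))"

lemma val_simps[simp]: "val c (Inl i) = int (fst c i)" "val c (Inr j) = int (snd c j)"
  by (simp_all add: val_def)

definition structured :: "nat \<Rightarrow> nat set \<Rightarrow> nat set \<Rightarrow> vec \<Rightarrow> bool" where
  "structured d DS AS \<psi> \<longleftrightarrow> (\<exists>Mt N Of Fx. gstruct isl (nodes DS AS) Mt N \<and>
     (\<forall>c\<in>basis d DS AS. \<psi> c \<noteq> 0 \<longrightarrow> gsat d (nodes DS AS) Mt N Of Fx (val c)))"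

lemma mod_to_dvd: "g = (f + k) mod d \<Longrightarrow> int d dvd (int g - int f - int k)"
proof -
  assume g: "g = (f + k) mod d"
  have "int g = (int f + int k) mod int d" using g by (simp add: of_nat_mod)
  then have "int g - (int f + int k) = - (int d * ((int f + int k) div int d))"
    by (simp add: minus_mod_eq_mult_div[symmetric])
  then have "int g - int f - int k = int d * (- ((int f + int k) div int d))" by (simp add: algebra_simps)
  then show ?thesis by (rule dvdI)
qed

lemma dvd_to_mod:
  assumes "a < d" "int d dvd (int a - int b - c)"
  shows "a = (b + nat (c mod int d)) mod d"
proof -
  have d0: "0 < int d" using assms(1) by simp
  have "int a mod int d = (int b + c) mod int d" using assms(2)
    by (simp add: mod_eq_dvd_iff algebra_simps)
  then have a: "int a = (int b + c) mod int d" using assms(1) by simp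
  have "int ((b + nat (c mod int d)) mod d) = (int b + c mod int d) mod int d"
    using d0 by (simp add: of_nat_mod)
  also have "\<dots> = (int b + c) mod int d" by (simp add: mod_add_right_eq)
  finally show ?thesis using a by linarith
qed

lemma pure_DA_structured:
  assumes "pure_DA d DS AS \<psi>"
  shows "structured d DS AS \<psi>"
proof -
  obtain \<pi> k r where inj: "inj_on \<pi> DS" and im: "\<pi> ` DS \<subseteq> AS"
    and sup: "\<forall>f g. (f, g) \<in> basis d DS AS \<and> \<psi> (f, g) \<noteq> 0 \<longrightarrow>
            (\<forall>i\<in>DS. g (\<pi> i) = (f i + k i) mod d) \<and> (\<forall>j\<in>AS - \<pi> ` DS. g j = r j)"
    using assms unfolding pure_DA_def by blast
  let ?iv = "the_inv_into DS \<pi>"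
  define Mt where "Mt = Inl ` DS \<union> Inr ` (\<pi> ` DS)"
  define N where "N x = (case x of Inl i \<Rightarrow> Inr (\<pi> i) | Inr j \<Rightarrow> Inl (?iv j))" for x
  define Of where "Of x = (case x of Inl i \<Rightarrow> int (k i) | Inr j \<Rightarrow> - int (k (?iv j)))" for x
  define Fx :: "nat + nat \<Rightarrow> int" where "Fx x = (case x of Inl i \<Rightarrow> 0 | Inr j \<Rightarrow> int (r j))" for x
  have iv: "\<And>i. i \<in> DS \<Longrightarrow> ?iv (\<pi> i) = i" using the_inv_into_f_f[OF inj] by simp
  have gs: "gstruct isl (nodes DS AS) Mt N"
    unfolding gstruct_def Mt_def nodes_def N_def using im iv by auto
  have "\<forall>c\<in>basis d DS AS. \<psi> c \<noteq> 0 \<longrightarrow> gsat d (nodes DS AS) Mt N Of Fx (val c)"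
  proof (intro ballI impI)
    fix c assume cb: "c \<in> basis d DS AS" and nz: "\<psi> c \<noteq> 0"
    obtain f g where c: "c = (f, g)" by fastforce
    have h1: "\<forall>i\<in>DS. g (\<pi> i) = (f i + k i) mod d" and h2: "\<forall>j\<in>AS - \<pi> ` DS. g j = r j"
      using sup cb nz c by auto
    have d1: "\<And>i. i \<in> DS \<Longrightarrow> int d dvd (int (g (\<pi> i)) - int (f i) - int (k i))"
      using h1 mod_to_dvd by blast
    show "gsat d (nodes DS AS) Mt N Of Fx (val c)"
      unfolding gsat_def
    proof (intro conjI ballI)
      fix x assume "x \<in> Mt"
      then consider (l) i where "i \<in> DS" "x = Inl i" | (r) i where "i \<in> DS" "x = Inr (\<pi> i)"
        unfolding Mt_def by auto
      then show "int d dvd (val c (N x) - val c x - Of x)"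
      proof cases
        case l then show ?thesis using d1 c by (simp add: N_def Of_def)
      next
        case r
        have e: "val c (N x) - val c x - Of x = - (int (g (\<pi> i)) - int (f i) - int (k i))"
          using r c iv by (simp add: N_def Of_def)
        show ?thesis using d1[OF r(1)] by (simp only: e dvd_minus_iff)
      qed
    next
      fix x assume "x \<in> nodes DS AS - Mt"
      then obtain j where "j \<in> AS - \<pi> ` DS" "x = Inr j" unfolding nodes_def Mt_def by auto
      then show "int d dvd (val c x - Fx x)" using h2 c by (simp add: Fx_def)
    qed
  qed
  then show ?thesis using gs unfolding structured_def by blast
qed

lemma pure_AD_structured:
  assumes "pure_AD d DS AS \<psi>"
  shows "structured d DS AS \<psi>"
proof -
  obtain \<pi> k r where inj: "inj_on \<pi> AS" and im: "\<pi> ` AS \<subseteq> DS"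
    and sup: "\<forall>f g. (f, g) \<in> basis d DS AS \<and> \<psi> (f, g) \<noteq> 0 \<longrightarrow>
            (\<forall>j\<in>AS. g j = (f (\<pi> j) + k j) mod d) \<and> (\<forall>i\<in>DS - \<pi> ` AS. f i = r i)"
    using assms unfolding pure_AD_def by blast
  let ?iv = "the_inv_into AS \<pi>"
  define Mt where "Mt = Inr ` AS \<union> Inl ` (\<pi> ` AS)"
  define N where "N x = (case x of Inr j \<Rightarrow> Inl (\<pi> j) | Inl i \<Rightarrow> Inr (?iv i))" for x
  define Of where "Of x = (case x of Inr j \<Rightarrow> - int (k j) | Inl i \<Rightarrow> int (k (?iv i)))" for x
  define Fx :: "nat + nat \<Rightarrow> int" where "Fx x = (case x of Inr j \<Rightarrow> 0 | Inl i \<Rightarrow> int (r i))" for x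
  have iv: "\<And>j. j \<in> AS \<Longrightarrow> ?iv (\<pi> j) = j" using the_inv_into_f_f[OF inj] by simp
  have gs: "gstruct isl (nodes DS AS) Mt N"
    unfolding gstruct_def Mt_def nodes_def N_def using im iv by auto
  have "\<forall>c\<in>basis d DS AS. \<psi> c \<noteq> 0 \<longrightarrow> gsat d (nodes DS AS) Mt N Of Fx (val c)"
  proof (intro ballI impI)
    fix c assume cb: "c \<in> basis d DS AS" and nz: "\<psi> c \<noteq> 0"
    obtain f g where c: "c = (f, g)" by fastforce
    have h1: "\<forall>j\<in>AS. g j = (f (\<pi> j) + k j) mod d" and h2: "\<forall>i\<in>DS - \<pi> ` AS. f i = r i"
      using sup cb nz c by auto
    have d1: "\<And>j. j \<in> AS \<Longrightarrow> int d dvd (int (g j) - int (f (\<pi> j)) - int (k j))"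
      using h1 mod_to_dvd by blast
    show "gsat d (nodes DS AS) Mt N Of Fx (val c)"
      unfolding gsat_def
    proof (intro conjI ballI)
      fix x assume "x \<in> Mt"
      then consider (r) j where "j \<in> AS" "x = Inr j" | (l) j where "j \<in> AS" "x = Inl (\<pi> j)"
        unfolding Mt_def by auto
      then show "int d dvd (val c (N x) - val c x - Of x)"
      proof cases
        case l then show ?thesis using d1 c iv by (simp add: N_def Of_def)
      next
        case r
        have e: "val c (N x) - val c x - Of x = - (int (g j) - int (f (\<pi> j)) - int (k j))"
          using r c by (simp add: N_def Of_def)
        show ?thesis using d1[OF r(1)] by (simp only: e dvd_minus_iff)
      qed
    next
      fix x assume "x \<in> nodes DS AS - Mt"
      then obtain i where "i \<in> DS - \<pi> ` AS" "x = Inl i" unfolding nodes_def Mt_def by auto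
      then show "int d dvd (val c x - Fx x)" using h2 c by (simp add: Fx_def)
    qed
  qed
  then show ?thesis using gs unfolding structured_def by blast
qed



lemma basis_mem: "(f, g) \<in> basis d DS AS \<Longrightarrow> i \<in> DS \<Longrightarrow> f i < d"
  "(f, g) \<in> basis d DS AS \<Longrightarrow> j \<in> AS \<Longrightarrow> g j < d"
  unfolding basis_def by (auto simp: PiE_iff)

lemma structured_DA:
  assumes st: "structured d DS AS \<psi>" and fin: "finite DS" "finite AS" and cd: "card DS \<le> card AS"
    and d: "0 < d"
  shows "pure_DA d DS AS \<psi>"
proof -
  obtain Mt N Of Fx where gs: "gstruct isl (nodes DS AS) Mt N"
    and sat: "\<forall>c\<in>basis d DS AS. \<psi> c \<noteq> 0 \<longrightarrow> gsat d (nodes DS AS) Mt N Of Fx (val c)"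
    using st unfolding structured_def by blast
  define PD where "PD = {i\<in>DS. Inl i \<in> Mt}"
  define PA where "PA = {j\<in>AS. Inr j \<in> Mt}"
  define \<sigma> where "\<sigma> i = projr (N (Inl i))" for i
  have Mtn: "Mt \<subseteq> nodes DS AS" and gN: "\<And>x. x \<in> Mt \<Longrightarrow> N x \<in> Mt \<and> N (N x) = x \<and> isl (N x) \<noteq> isl x"
    using gs unfolding gstruct_def by auto
  have Nl: "\<And>i. i \<in> PD \<Longrightarrow> N (Inl i) = Inr (\<sigma> i) \<and> \<sigma> i \<in> PA"
  proof -
    fix i assume i: "i \<in> PD"
    then have m: "Inl i \<in> Mt" using PD_def by auto
    then have "\<not> isl (N (Inl i))" using gN by fastforce
    then have e: "N (Inl i) = Inr (\<sigma> i)" unfolding \<sigma>_def by (cases "N (Inl i)") auto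
    have "N (Inl i) \<in> nodes DS AS" using gN[OF m] Mtn by auto
    then have "\<sigma> i \<in> AS" using e unfolding nodes_def by auto
    then show "N (Inl i) = Inr (\<sigma> i) \<and> \<sigma> i \<in> PA" using e gN[OF m] PA_def by auto
  qed
  have bij: "bij_betw \<sigma> PD PA"
  proof (rule bij_betw_imageI)
    show "inj_on \<sigma> PD" unfolding inj_on_def
    proof (intro ballI impI)
      fix i i' assume "i \<in> PD" "i' \<in> PD" "\<sigma> i = \<sigma> i'"
      then have "N (N (Inl i)) = N (N (Inl i'))" using Nl by metis
      then show "i = i'" using gN \<open>i \<in> PD\<close> \<open>i' \<in> PD\<close> PD_def by auto
    qed
    show "\<sigma> ` PD = PA"
    proof
      show "\<sigma> ` PD \<subseteq> PA" using Nl by auto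
      show "PA \<subseteq> \<sigma> ` PD"
      proof
        fix j assume j: "j \<in> PA"
        then have m: "Inr j \<in> Mt" using PA_def by auto
        then have "isl (N (Inr j))" using gN by fastforce
        then obtain i where e: "N (Inr j) = Inl i" by (cases "N (Inr j)") auto
        have "N (Inr j) \<in> nodes DS AS" using gN[OF m] Mtn by auto
        then have iD: "i \<in> DS" using e unfolding nodes_def by auto
        have iP: "i \<in> PD" using gN[OF m] e iD PD_def by auto
        have "N (Inl i) = Inr j" using gN[OF m] e by simp
        then have "\<sigma> i = j" using Nl[OF iP] by simp
        then show "j \<in> \<sigma> ` PD" using iP by blast
      qed
    qed
  qed
  have cPD: "card PD = card PA" using bij_betw_same_card[OF bij] .
  have PDs: "PD \<subseteq> DS" and PAs: "PA \<subseteq> AS" using PD_def PA_def by auto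
  have "card (DS - PD) \<le> card (AS - PA)"
    using cd cPD card_Diff_subset[OF finite_subset[OF PDs fin(1)] PDs]
      card_Diff_subset[OF finite_subset[OF PAs fin(2)] PAs] by simp
  then obtain h where h: "h ` (DS - PD) \<subseteq> AS - PA" and hinj: "inj_on h (DS - PD)"
    using card_le_inj[of "DS - PD" "AS - PA"] fin by auto
  define \<pi> where "\<pi> i = (if i \<in> PD then \<sigma> i else h i)" for i
  define k where "k i = (if i \<in> PD then nat (Of (Inl i) mod int d)
                    else nat ((Fx (Inr (h i)) - Fx (Inl i)) mod int d))" for i
  define r where "r j = nat (Fx (Inr j) mod int d)" for j
  have pim: "\<pi> ` DS \<subseteq> AS"
  proof
    fix j assume "j \<in> \<pi> ` DS"
    then obtain i where i: "i \<in> DS" "j = \<pi> i" by auto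
    show "j \<in> AS"
    proof (cases "i \<in> PD")
      case True then show ?thesis using Nl[OF True] PAs i unfolding \<pi>_def by auto
    next
      case False then show ?thesis using h i unfolding \<pi>_def by auto
    qed
  qed
  have pinj: "inj_on \<pi> DS" unfolding inj_on_def
  proof (intro ballI impI)
    fix i i' assume i: "i \<in> DS" and i': "i' \<in> DS" and e: "\<pi> i = \<pi> i'"
    show "i = i'"
    proof (cases "i \<in> PD"; cases "i' \<in> PD")
      assume "i \<in> PD" "i' \<in> PD" then show ?thesis
        using e bij unfolding \<pi>_def bij_betw_def inj_on_def by auto
    next
      assume "i \<in> PD" "i' \<notin> PD" then show ?thesis
        using e Nl h i' unfolding \<pi>_def by force
    next
      assume "i \<notin> PD" "i' \<in> PD" then show ?thesis
        using e Nl h i unfolding \<pi>_def by force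
    next
      assume "i \<notin> PD" "i' \<notin> PD" then show ?thesis
        using e hinj i i' unfolding \<pi>_def inj_on_def by auto
    qed
  qed
  have imPA: "\<pi> ` DS \<inter> PA \<supseteq> PA" using bij unfolding bij_betw_def \<pi>_def using PDs by force
  show ?thesis unfolding pure_DA_def
  proof (intro exI conjI allI impI ballI)
    show "inj_on \<pi> DS" by fact
    show "\<pi> ` DS \<subseteq> AS" by fact
    show "\<And>i. i \<in> DS \<Longrightarrow> k i < d" using d unfolding k_def by (simp add: nat_less_iff)
    show "\<And>j. j \<in> AS - \<pi> ` DS \<Longrightarrow> r j < d" using d unfolding r_def by (simp add: nat_less_iff)
    fix f g assume fg: "(f, g) \<in> basis d DS AS \<and> \<psi> (f, g) \<noteq> 0"
    then have gv: "gsat d (nodes DS AS) Mt N Of Fx (val (f, g))" using sat by blast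
    have fix1: "\<And>x. x \<in> nodes DS AS - Mt \<Longrightarrow> int d dvd (val (f, g) x - Fx x)"
      using gv unfolding gsat_def by blast
    have mat: "\<And>x. x \<in> Mt \<Longrightarrow> int d dvd (val (f, g) (N x) - val (f, g) x - Of x)"
      using gv unfolding gsat_def by blast
    {
      fix i assume i: "i \<in> DS"
      show "g (\<pi> i) = (f i + k i) mod d"
      proof (cases "i \<in> PD")
        case True
        have "int d dvd (int (g (\<sigma> i)) - int (f i) - Of (Inl i))"
          using mat[of "Inl i"] True PD_def Nl[OF True] by simp
        moreover have "g (\<sigma> i) < d" using basis_mem(2)[of f g d DS AS "\<sigma> i"] fg Nl[OF True] PAs by auto
        ultimately show ?thesis using dvd_to_mod True unfolding \<pi>_def k_def by simp
      next
        case False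
        have hA: "h i \<in> AS - PA" using h i False by auto
        have a1: "int d dvd (int (f i) - Fx (Inl i))"
          using fix1[of "Inl i"] i False PD_def by (simp add: nodes_def)
        have a2: "int d dvd (int (g (h i)) - Fx (Inr (h i)))"
          using fix1[of "Inr (h i)"] hA PA_def by (simp add: nodes_def)
        have "int d dvd (int (g (h i)) - int (f i) - (Fx (Inr (h i)) - Fx (Inl i)))"
          using dvd_diff[OF a2 a1] by (simp add: algebra_simps)
        moreover have "g (h i) < d" using basis_mem(2)[of f g d DS AS "h i"] fg hA by auto
        ultimately show ?thesis using dvd_to_mod False unfolding \<pi>_def k_def by simp
      qed
    }
    fix j assume j: "j \<in> AS - \<pi> ` DS"
    then have "j \<notin> PA" using imPA by auto
    then have a2: "int d dvd (int (g j) - Fx (Inr j))"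
      using fix1[of "Inr j"] j PA_def by (simp add: nodes_def)
    have "g j < d" using basis_mem(2)[of f g d DS AS j] fg j by auto
    then have "g j = (0 + nat (Fx (Inr j) mod int d)) mod d" using a2 dvd_to_mod[of "g j" d 0] by simp
    then show "g j = r j" unfolding r_def using d by (simp add: nat_less_iff)
  qed
qed

lemma structured_AD:
  assumes st: "structured d DS AS \<psi>" and fin: "finite DS" "finite AS" and cd: "card AS \<le> card DS"
    and d: "0 < d"
  shows "pure_AD d DS AS \<psi>"
proof -
  obtain Mt N Of Fx where gs: "gstruct isl (nodes DS AS) Mt N"
    and sat: "\<forall>c\<in>basis d DS AS. \<psi> c \<noteq> 0 \<longrightarrow> gsat d (nodes DS AS) Mt N Of Fx (val c)"
    using st unfolding structured_def by blast
  define PD where "PD = {i\<in>DS. Inl i \<in> Mt}"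
  define PA where "PA = {j\<in>AS. Inr j \<in> Mt}"
  define \<sigma> where "\<sigma> j = projl (N (Inr j))" for j
  have Mtn: "Mt \<subseteq> nodes DS AS" and gN: "\<And>x. x \<in> Mt \<Longrightarrow> N x \<in> Mt \<and> N (N x) = x \<and> isl (N x) \<noteq> isl x"
    using gs unfolding gstruct_def by auto
  have Nl: "\<And>j. j \<in> PA \<Longrightarrow> N (Inr j) = Inl (\<sigma> j) \<and> \<sigma> j \<in> PD"
  proof -
    fix j assume j: "j \<in> PA"
    then have m: "Inr j \<in> Mt" using PA_def by auto
    then have "isl (N (Inr j))" using gN by fastforce
    then have e: "N (Inr j) = Inl (\<sigma> j)" unfolding \<sigma>_def by (cases "N (Inr j)") auto
    have "N (Inr j) \<in> nodes DS AS" using gN[OF m] Mtn by auto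
    then have "\<sigma> j \<in> DS" using e unfolding nodes_def by auto
    then show "N (Inr j) = Inl (\<sigma> j) \<and> \<sigma> j \<in> PD" using e gN[OF m] PD_def by auto
  qed
  have bij: "bij_betw \<sigma> PA PD"
  proof (rule bij_betw_imageI)
    show "inj_on \<sigma> PA" unfolding inj_on_def
    proof (intro ballI impI)
      fix i i' assume "i \<in> PA" "i' \<in> PA" "\<sigma> i = \<sigma> i'"
      then have "N (N (Inr i)) = N (N (Inr i'))" using Nl by metis
      then show "i = i'" using gN \<open>i \<in> PA\<close> \<open>i' \<in> PA\<close> PA_def by auto
    qed
    show "\<sigma> ` PA = PD"
    proof
      show "\<sigma> ` PA \<subseteq> PD" using Nl by auto
      show "PD \<subseteq> \<sigma> ` PA"
      proof
        fix j assume j: "j \<in> PD"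
        then have m: "Inl j \<in> Mt" using PD_def by auto
        then have "\<not> isl (N (Inl j))" using gN by fastforce
        then obtain i where e: "N (Inl j) = Inr i" by (cases "N (Inl j)") auto
        have "N (Inl j) \<in> nodes DS AS" using gN[OF m] Mtn by auto
        then have iD: "i \<in> AS" using e unfolding nodes_def by auto
        have iP: "i \<in> PA" using gN[OF m] e iD PA_def by auto
        have "N (Inr i) = Inl j" using gN[OF m] e by simp
        then have "\<sigma> i = j" using Nl[OF iP] by simp
        then show "j \<in> \<sigma> ` PA" using iP by blast
      qed
    qed
  qed
  have cPD: "card PA = card PD" using bij_betw_same_card[OF bij] .
  have PDs: "PD \<subseteq> DS" and PAs: "PA \<subseteq> AS" using PD_def PA_def by auto
  have "card (AS - PA) \<le> card (DS - PD)"
    using cd cPD card_Diff_subset[OF finite_subset[OF PDs fin(1)] PDs]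
      card_Diff_subset[OF finite_subset[OF PAs fin(2)] PAs] by simp
  then obtain h where h: "h ` (AS - PA) \<subseteq> DS - PD" and hinj: "inj_on h (AS - PA)"
    using card_le_inj[of "AS - PA" "DS - PD"] fin by auto
  define \<pi> where "\<pi> j = (if j \<in> PA then \<sigma> j else h j)" for j
  define k where "k j = (if j \<in> PA then nat ((- Of (Inr j)) mod int d)
                    else nat ((Fx (Inr j) - Fx (Inl (h j))) mod int d))" for j
  define r where "r i = nat (Fx (Inl i) mod int d)" for i
  have pim: "\<pi> ` AS \<subseteq> DS"
  proof
    fix j assume "j \<in> \<pi> ` AS"
    then obtain i where i: "i \<in> AS" "j = \<pi> i" by auto
    show "j \<in> DS"
    proof (cases "i \<in> PA")
      case True then show ?thesis using Nl[OF True] PDs i unfolding \<pi>_def by auto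
    next
      case False then show ?thesis using h i unfolding \<pi>_def by auto
    qed
  qed
  have pinj: "inj_on \<pi> AS" unfolding inj_on_def
  proof (intro ballI impI)
    fix i i' assume i: "i \<in> AS" and i': "i' \<in> AS" and e: "\<pi> i = \<pi> i'"
    show "i = i'"
    proof (cases "i \<in> PA"; cases "i' \<in> PA")
      assume "i \<in> PA" "i' \<in> PA" then show ?thesis
        using e bij unfolding \<pi>_def bij_betw_def inj_on_def by auto
    next
      assume "i \<in> PA" "i' \<notin> PA" then show ?thesis
        using e Nl h i' unfolding \<pi>_def by force
    next
      assume "i \<notin> PA" "i' \<in> PA" then show ?thesis
        using e Nl h i unfolding \<pi>_def by force
    next
      assume "i \<notin> PA" "i' \<notin> PA" then show ?thesis
        using e hinj i i' unfolding \<pi>_def inj_on_def by auto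
    qed
  qed
  have imPA: "\<pi> ` AS \<inter> PD \<supseteq> PD" using bij unfolding bij_betw_def \<pi>_def using PAs by force
  show ?thesis unfolding pure_AD_def
  proof (intro exI conjI allI impI ballI)
    show "inj_on \<pi> AS" by fact
    show "\<pi> ` AS \<subseteq> DS" by fact
    show "\<And>i. i \<in> AS \<Longrightarrow> k i < d" using d unfolding k_def by (simp add: nat_less_iff)
    show "\<And>j. j \<in> DS - \<pi> ` AS \<Longrightarrow> r j < d" using d unfolding r_def by (simp add: nat_less_iff)
    fix f g assume fg: "(f, g) \<in> basis d DS AS \<and> \<psi> (f, g) \<noteq> 0"
    then have gv: "gsat d (nodes DS AS) Mt N Of Fx (val (f, g))" using sat by blast
    have fix1: "\<And>x. x \<in> nodes DS AS - Mt \<Longrightarrow> int d dvd (val (f, g) x - Fx x)"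
      using gv unfolding gsat_def by blast
    have mat: "\<And>x. x \<in> Mt \<Longrightarrow> int d dvd (val (f, g) (N x) - val (f, g) x - Of x)"
      using gv unfolding gsat_def by blast
    {
      fix i assume i: "i \<in> AS"
      show "g i = (f (\<pi> i) + k i) mod d"
      proof (cases "i \<in> PA")
        case True
        have "int d dvd (int (f (\<sigma> i)) - int (g i) - Of (Inr i))"
          using mat[of "Inr i"] True PA_def Nl[OF True] by simp
        then have "int d dvd - (int (f (\<sigma> i)) - int (g i) - Of (Inr i))" by (simp only: dvd_minus_iff)
        then have "int d dvd (int (g i) - int (f (\<sigma> i)) - (- Of (Inr i)))" by (simp add: algebra_simps)
        moreover have "g i < d" using basis_mem(2)[of f g d DS AS i] fg i by auto
        ultimately show ?thesis using dvd_to_mod True unfolding \<pi>_def k_def by simp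
      next
        case False
        have hA: "h i \<in> DS - PD" using h i False by auto
        have a1: "int d dvd (int (g i) - Fx (Inr i))"
          using fix1[of "Inr i"] i False PA_def by (simp add: nodes_def)
        have a2: "int d dvd (int (f (h i)) - Fx (Inl (h i)))"
          using fix1[of "Inl (h i)"] hA PD_def by (simp add: nodes_def)
        have "int d dvd (int (g i) - int (f (h i)) - (Fx (Inr i) - Fx (Inl (h i))))"
          using dvd_diff[OF a1 a2] by (simp add: algebra_simps)
        moreover have "g i < d" using basis_mem(2)[of f g d DS AS i] fg i by auto
        ultimately show ?thesis using dvd_to_mod False unfolding \<pi>_def k_def by simp
      qed
    }
    fix j assume j: "j \<in> DS - \<pi> ` AS"
    then have "j \<notin> PD" using imPA by auto
    then have a2: "int d dvd (int (f j) - Fx (Inl j))"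
      using fix1[of "Inl j"] j PD_def by (simp add: nodes_def)
    have "f j < d" using basis_mem(1)[of f g d DS AS j] fg j by auto
    then have "f j = (0 + nat (Fx (Inl j) mod int d)) mod d" using a2 dvd_to_mod[of "f j" d 0] by simp
    then show "f j = r j" unfolding r_def using d by (simp add: nat_less_iff)
  qed
qed



lemma join_basis:
  assumes "a \<in> basis d DS' AS'" "y \<in> basis d (DS - DS') (AS - AS')" "DS' \<subseteq> DS" "AS' \<subseteq> AS"
  shows "join DS' AS' a y \<in> basis d DS AS"
  using assms unfolding basis_def join_def by (auto simp: PiE_iff extensional_def)

lemma val_join: "val (join DS' AS' a y) x = (if x \<in> nodes DS' AS' then val a x else val y x)"
  by (cases x) (auto simp: join_def nodes_def)

lemma gsat_cong:
  assumes "gstruct tp V Mt N" "\<forall>x\<in>V. w x = w' x"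
  shows "gsat d V Mt N Of Fx w = gsat d V Mt N Of Fx w'"
proof -
  have "\<forall>x\<in>Mt. x \<in> V \<and> N x \<in> V" using assms(1) unfolding gstruct_def by auto
  then show ?thesis using assms(2) unfolding gsat_def by auto
qed

lemma nodes_diff: "DS' \<subseteq> DS \<Longrightarrow> AS' \<subseteq> AS \<Longrightarrow> nodes (DS - DS') (AS - AS') = nodes DS AS - nodes DS' AS'"
  unfolding nodes_def by auto

lemma finite_nodes: "finite DS \<Longrightarrow> finite AS \<Longrightarrow> finite (nodes DS AS)"
  unfolding nodes_def by auto

lemma core:
  assumes sp: "structured d DS' AS' \<phi>" and sq: "structured d DS AS \<psi>"
    and fin: "finite DS" "finite AS" and sb: "DS' \<subseteq> DS" "AS' \<subseteq> AS"
  shows "structured d (DS - DS') (AS - AS')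
     (\<lambda>r. if r \<in> basis d (DS - DS') (AS - AS') then
        (\<Sum>b\<in>basis d DS' AS'. cnj (\<phi> b) * \<psi> (join DS' AS' b r)) else 0)"
proof -
  obtain Mt2 N2 O2 F2 where g2: "gstruct isl (nodes DS' AS') Mt2 N2"
    and s2: "\<forall>c\<in>basis d DS' AS'. \<phi> c \<noteq> 0 \<longrightarrow> gsat d (nodes DS' AS') Mt2 N2 O2 F2 (val c)"
    using sp unfolding structured_def by blast
  obtain Mt1 N1 O1 F1 where g1: "gstruct isl (nodes DS AS) Mt1 N1"
    and s1: "\<forall>c\<in>basis d DS AS. \<psi> c \<noteq> 0 \<longrightarrow> gsat d (nodes DS AS) Mt1 N1 O1 F1 (val c)"
    using sq unfolding structured_def by blast
  have sn: "nodes DS' AS' \<subseteq> nodes DS AS" using sb unfolding nodes_def by auto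
  interpret wk "nodes DS AS" "nodes DS' AS'" isl Mt1 Mt2 N1 N2
    using finite_nodes[OF fin] sn g1 g2 by unfold_locales
  obtain Mt N Of Fx where g3: "gstruct isl (nodes DS AS - nodes DS' AS') Mt N"
    and s3: "\<forall>w. gsat d (nodes DS AS) Mt1 N1 O1 F1 w \<and> gsat d (nodes DS' AS') Mt2 N2 O2 F2 w
        \<longrightarrow> gsat d (nodes DS AS - nodes DS' AS') Mt N Of Fx w"
    using walk_main[of d O1 F1 O2 F2] by blast
  have nd: "nodes (DS - DS') (AS - AS') = nodes DS AS - nodes DS' AS'" using nodes_diff[OF sb] .
  show ?thesis unfolding structured_def nd
  proof (intro exI conjI ballI impI)
    show "gstruct isl (nodes DS AS - nodes DS' AS') Mt N" by fact
    fix r assume rb: "r \<in> basis d (DS - DS') (AS - AS')"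
      and nz: "(if r \<in> basis d (DS - DS') (AS - AS') then
        (\<Sum>b\<in>basis d DS' AS'. cnj (\<phi> b) * \<psi> (join DS' AS' b r)) else 0) \<noteq> 0"
    then have "(\<Sum>b\<in>basis d DS' AS'. cnj (\<phi> b) * \<psi> (join DS' AS' b r)) \<noteq> 0" by simp
    then obtain b where bb: "b \<in> basis d DS' AS'" and nz2: "cnj (\<phi> b) * \<psi> (join DS' AS' b r) \<noteq> 0"
      by (meson sum.neutral)
    have jb: "join DS' AS' b r \<in> basis d DS AS" using join_basis[OF bb rb sb] .
    let ?w = "val (join DS' AS' b r)"
    have w1: "gsat d (nodes DS AS) Mt1 N1 O1 F1 ?w" using s1 jb nz2 by auto
    have "gsat d (nodes DS' AS') Mt2 N2 O2 F2 (val b)" using s2 bb nz2 by auto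
    then have w2: "gsat d (nodes DS' AS') Mt2 N2 O2 F2 ?w"
      using gsat_cong[OF g2, of ?w "val b"] val_join by simp
    have "gsat d (nodes DS AS - nodes DS' AS') Mt N Of Fx ?w" using s3 w1 w2 by blast
    then show "gsat d (nodes DS AS - nodes DS' AS') Mt N Of Fx (val r)"
      using gsat_cong[OF g3, of ?w "val r"] val_join by simp
  qed
qed



lemma finite_basis: "finite DS \<Longrightarrow> finite AS \<Longrightarrow> finite (basis d DS AS)"
  unfolding basis_def by (auto intro!: finite_PiE)

lemma normalize:
  assumes st: "structured d DS AS u" and sp: "in_space d DS AS u" and nz: "u \<noteq> (\<lambda>_. 0)"
    and fin: "finite DS" "finite AS" and d: "0 < d"
  shows "\<exists>t>0. \<exists>v. pure_state d DS AS v \<and> u = (\<lambda>c. complex_of_real t * v c)"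
proof -
  obtain c0 where c0: "u c0 \<noteq> 0" using nz by (metis ext)
  then have c0b: "c0 \<in> basis d DS AS" using sp unfolding in_space_def by metis
  define s where "s = (\<Sum>c\<in>basis d DS AS. (cmod (u c))\<^sup>2)"
  have "(cmod (u c0))\<^sup>2 \<le> s" unfolding s_def
    by (rule member_le_sum[OF c0b]) (auto simp: finite_basis[OF fin])
  moreover have "0 < (cmod (u c0))\<^sup>2" using c0 by simp
  ultimately have s0: "0 < s" by linarith
  define t where "t = sqrt s"
  have t0: "0 < t" using s0 t_def by simp
  define v where "v c = u c / complex_of_real t" for c
  have uv: "u = (\<lambda>c. complex_of_real t * v c)" using t0 unfolding v_def by (auto simp: fun_eq_iff)
  have vs: "in_space d DS AS v" using sp unfolding in_space_def v_def by simp
  have "(\<Sum>c\<in>basis d DS AS. (cmod (v c))\<^sup>2) = (\<Sum>c\<in>basis d DS AS. (cmod (u c))\<^sup>2 / t\<^sup>2)"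
    unfolding v_def using t0 by (simp add: norm_divide power_divide)
  also have "\<dots> = s / t\<^sup>2" unfolding s_def by (simp add: sum_divide_distrib)
  also have "\<dots> = 1" using s0 t_def by simp
  finally have un: "unit_vec d DS AS v" using vs unfolding unit_vec_def by simp
  have sv: "structured d DS AS v"
  proof -
    have "\<And>c. (v c \<noteq> 0) = (u c \<noteq> 0)" unfolding v_def using t0 by simp
    then show ?thesis using st unfolding structured_def by simp
  qed
  have "pure_state d DS AS v"
  proof (cases "card DS \<le> card AS")
    case True then show ?thesis using structured_DA[OF sv fin True d] un pure_state_def by blast
  next
    case False then show ?thesis using structured_AD[OF sv fin _ d] un pure_state_def by simp
  qed
  then show ?thesis using uv t0 by blast
qed

definition cone :: "nat \<Rightarrow> nat set \<Rightarrow> nat set \<Rightarrow> op \<Rightarrow> bool" where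
  "cone d DS AS \<sigma> \<longleftrightarrow> (\<exists>(N::nat) c v. (\<forall>i<N. (0::real) \<le> c i \<and> pure_state d DS AS (v i))
      \<and> \<sigma> = (\<lambda>a b. \<Sum>i<N. complex_of_real (c i) * proj (v i) a b))"

lemma cone_zero: "cone d DS AS (\<lambda>_ _. 0)"
  unfolding cone_def by (rule exI[of _ 0]) simp

lemma sum_split_add: "(\<Sum>i<m + (n::nat). f i) = (\<Sum>i<m. f i) + (\<Sum>i<n. f (m + i))"
  by (induction n) (simp_all add: algebra_simps)

lemma cone_add:
  assumes "cone d DS AS \<sigma>1" "cone d DS AS \<sigma>2"
  shows "cone d DS AS (\<lambda>a b. \<sigma>1 a b + \<sigma>2 a b)"
proof -
  obtain N1 :: nat and c1 v1 where h1: "\<forall>i<N1. 0 \<le> c1 i \<and> pure_state d DS AS (v1 i)"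
    and e1: "\<sigma>1 = (\<lambda>a b. \<Sum>i<N1. complex_of_real (c1 i) * proj (v1 i) a b)"
    using assms(1) unfolding cone_def by blast
  obtain N2 :: nat and c2 v2 where h2: "\<forall>i<N2. 0 \<le> c2 i \<and> pure_state d DS AS (v2 i)"
    and e2: "\<sigma>2 = (\<lambda>a b. \<Sum>i<N2. complex_of_real (c2 i) * proj (v2 i) a b)"
    using assms(2) unfolding cone_def by blast
  define c where "c i = (if i < N1 then c1 i else c2 (i - N1))" for i
  define v where "v i = (if i < N1 then v1 i else v2 (i - N1))" for i
  show ?thesis unfolding cone_def
  proof (intro exI conjI)
    show "\<forall>i<N1 + N2. 0 \<le> c i \<and> pure_state d DS AS (v i)"
      using h1 h2 unfolding c_def v_def by auto
    show "(\<lambda>a b. \<sigma>1 a b + \<sigma>2 a b) = (\<lambda>a b. \<Sum>i<N1 + N2. complex_of_real (c i) * proj (v i) a b)"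
      unfolding e1 e2 sum_split_add c_def v_def by (auto simp: fun_eq_iff)
  qed
qed

lemma cone_scale:
  assumes "cone d DS AS \<sigma>" "0 \<le> s"
  shows "cone d DS AS (\<lambda>a b. complex_of_real s * \<sigma> a b)"
proof -
  obtain N :: nat and c v where h: "\<forall>i<N. 0 \<le> c i \<and> pure_state d DS AS (v i)"
    and e: "\<sigma> = (\<lambda>a b. \<Sum>i<N. complex_of_real (c i) * proj (v i) a b)"
    using assms(1) unfolding cone_def by blast
  show ?thesis unfolding cone_def
  proof (intro exI conjI)
    show "\<forall>i<N. 0 \<le> s * c i \<and> pure_state d DS AS (v i)" using h assms(2) by auto
    show "(\<lambda>a b. complex_of_real s * \<sigma> a b) = (\<lambda>a b. \<Sum>i<N. complex_of_real (s * c i) * proj (v i) a b)"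
      unfolding e by (auto simp: fun_eq_iff sum_distrib_left mult.assoc)
  qed
qed

lemma cone_sum:
  assumes "finite A" "\<forall>x\<in>A. cone d DS AS (X x)"
  shows "cone d DS AS (\<lambda>a b. \<Sum>x\<in>A. X x a b)"
  using assms
proof (induction A rule: finite_induct)
  case empty then show ?case using cone_zero by simp
next
  case (insert x F)
  have "cone d DS AS (\<lambda>a b. X x a b + (\<Sum>y\<in>F. X y a b))"
    using cone_add[of d DS AS "X x" "\<lambda>a b. \<Sum>y\<in>F. X y a b"] insert by auto
  then show ?case using insert by simp
qed

lemma cone_proj:
  assumes "u = (\<lambda>_. 0) \<or> (\<exists>t>0. \<exists>v. pure_state d DS AS v \<and> u = (\<lambda>c. complex_of_real t * v c))"
  shows "cone d DS AS (proj u)"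
  using assms
proof
  assume "u = (\<lambda>_. 0)"
  then have "proj u = (\<lambda>_ _. 0)" unfolding proj_def by simp
  then show ?thesis using cone_zero by simp
next
  assume "\<exists>t>0. \<exists>v. pure_state d DS AS v \<and> u = (\<lambda>c. complex_of_real t * v c)"
  then obtain t v where t: "0 < t" and pv: "pure_state d DS AS v" and u: "u = (\<lambda>c. complex_of_real t * v c)"
    by blast
  show ?thesis unfolding cone_def
  proof (intro exI[of _ "Suc 0"] exI[of _ "\<lambda>_. t\<^sup>2"] exI[of _ "\<lambda>_. v"] conjI)
    show "\<forall>i<Suc 0. 0 \<le> t\<^sup>2 \<and> pure_state d DS AS v" using pv by simp
    show "proj u = (\<lambda>a b. \<Sum>i<Suc 0. complex_of_real (t\<^sup>2) * proj v a b)"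
      unfolding u proj_def by (auto simp: fun_eq_iff power2_eq_square)
  qed
qed

lemma cone_result:
  assumes "cone d DS AS \<sigma>"
  shows "\<sigma> = (\<lambda>_ _. 0) \<or> (\<exists>c::real. c > 0 \<and> (\<exists>\<tau>. valid_state d DS AS \<tau> \<and> \<sigma> = (\<lambda>a b. complex_of_real c * \<tau> a b)))"
proof -
  obtain N :: nat and c v where h: "\<forall>i<N. 0 \<le> c i \<and> pure_state d DS AS (v i)"
    and e: "\<sigma> = (\<lambda>a b. \<Sum>i<N. complex_of_real (c i) * proj (v i) a b)"
    using assms(1) unfolding cone_def by blast
  define W where "W = (\<Sum>i<N. c i)"
  have W0: "0 \<le> W" unfolding W_def by (rule sum_nonneg) (use h in auto)
  show ?thesis
  proof (cases "W = 0")
    case True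
    then have "\<forall>i\<in>{..<N}. c i = 0" using h W_def sum_nonneg_eq_0_iff[of "{..<N}" c] by auto
    then have "\<sigma> = (\<lambda>_ _. 0)" unfolding e by (auto simp: fun_eq_iff)
    then show ?thesis by simp
  next
    case False
    then have Wp: "0 < W" using W0 by simp
    define \<tau> where "\<tau> = (\<lambda>a b. \<Sum>i<N. complex_of_real (c i / W) * proj (v i) a b)"
    have "valid_state d DS AS \<tau>" unfolding valid_state_def
    proof (intro exI conjI)
      show "\<forall>i<N. 0 \<le> c i / W \<and> pure_state d DS AS (v i)" using h Wp by auto
      show "(\<Sum>i<N. c i / W) = 1" using Wp unfolding W_def by (simp add: sum_divide_distrib[symmetric])
      show "\<tau> = (\<lambda>a b. \<Sum>i<N. complex_of_real (c i / W) * proj (v i) a b)" by (simp add: \<tau>_def)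
    qed
    moreover have "\<sigma> = (\<lambda>a b. complex_of_real W * \<tau> a b)"
      unfolding e \<tau>_def using Wp by (auto simp: fun_eq_iff sum_distrib_left mult.assoc[symmetric])
    ultimately show ?thesis using Wp by blast
  qed
qed

lemma cone_trace:
  assumes "cone d DS AS \<sigma>" "(\<Sum>r\<in>basis d DS AS. \<sigma> r r) = 1"
  shows "valid_state d DS AS \<sigma>"
proof -
  obtain N :: nat and c v where h: "\<forall>i<N. 0 \<le> c i \<and> pure_state d DS AS (v i)"
    and e: "\<sigma> = (\<lambda>a b. \<Sum>i<N. complex_of_real (c i) * proj (v i) a b)"
    using assms(1) unfolding cone_def by blast
  have tr: "\<And>i. i < N \<Longrightarrow> (\<Sum>r\<in>basis d DS AS. proj (v i) r r) = 1"
  proof -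
    fix i assume "i < N"
    then have "unit_vec d DS AS (v i)" using h pure_state_def by auto
    then have "(\<Sum>r\<in>basis d DS AS. (cmod (v i r))\<^sup>2) = 1" unfolding unit_vec_def by simp
    then have "complex_of_real (\<Sum>r\<in>basis d DS AS. (cmod (v i r))\<^sup>2) = 1" by simp
    moreover have "(\<Sum>r\<in>basis d DS AS. proj (v i) r r) = (\<Sum>r\<in>basis d DS AS. complex_of_real ((cmod (v i r))\<^sup>2))"
      by (rule sum.cong) (simp_all only: proj_def complex_norm_square)
    ultimately show "(\<Sum>r\<in>basis d DS AS. proj (v i) r r) = 1" by (simp only: of_real_sum)
  qed
  have "(\<Sum>r\<in>basis d DS AS. \<sigma> r r) = (\<Sum>i<N. complex_of_real (c i) * (\<Sum>r\<in>basis d DS AS. proj (v i) r r))"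
    unfolding e by (simp add: sum.swap[of _ "basis d DS AS"] sum_distrib_left)
  also have "\<dots> = (\<Sum>i<N. complex_of_real (c i))" using tr by simp
  finally have "complex_of_real (\<Sum>i<N. c i) = 1" using assms(2) by simp
  then have "(\<Sum>i<N. c i) = 1" using of_real_eq_1_iff by blast
  then show ?thesis unfolding valid_state_def using h e by blast
qed



definition U :: "nat \<Rightarrow> nat set \<Rightarrow> nat set \<Rightarrow> nat set \<Rightarrow> nat set \<Rightarrow> vec \<Rightarrow> vec \<Rightarrow> vec" where
  "U d DS AS DS' AS' \<phi> \<psi> = (\<lambda>r. if r \<in> basis d (DS - DS') (AS - AS') then
        (\<Sum>b\<in>basis d DS' AS'. cnj (\<phi> b) * \<psi> (join DS' AS' b r)) else 0)"

lemma pure_structured: "pure_state d DS AS \<psi> \<Longrightarrow> structured d DS AS \<psi>"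
  unfolding pure_state_def using pure_DA_structured pure_AD_structured by blast

lemma cone_U:
  assumes "structured d DS' AS' \<phi>" "structured d DS AS \<psi>"
    and fin: "finite DS" "finite AS" and sb: "DS' \<subseteq> DS" "AS' \<subseteq> AS" and d: "0 < d"
  shows "cone d (DS - DS') (AS - AS') (proj (U d DS AS DS' AS' \<phi> \<psi>))"
proof -
  let ?u = "U d DS AS DS' AS' \<phi> \<psi>"
  have st: "structured d (DS - DS') (AS - AS') ?u" unfolding U_def using core[OF assms(1,2) fin sb] .
  have sp: "in_space d (DS - DS') (AS - AS') ?u" unfolding in_space_def U_def by simp
  have fin2: "finite (DS - DS')" "finite (AS - AS')" using fin by auto
  show ?thesis
  proof (cases "?u = (\<lambda>_. 0)")
    case True then show ?thesis using cone_proj by blast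
  next
    case False then show ?thesis using cone_proj normalize[OF st sp False fin2 d] by blast
  qed
qed

lemma swap4:
  "(\<Sum>a\<in>A. \<Sum>b\<in>B. \<Sum>i\<in>I. \<Sum>j\<in>J. f a b i j) = (\<Sum>i\<in>I. \<Sum>j\<in>J. \<Sum>b\<in>B. \<Sum>a\<in>A. f a b i j)"
  by (simp only: sum.swap[where A=B and B=I] sum.swap[where A=B and B=J] sum.swap[where A=A and B=I]
       sum.swap[where A=A and B=J] sum.swap[where A=A and B=B])

lemma ptrace_expand:
  assumes P: "P = (\<lambda>a b. \<Sum>i<N. complex_of_real (c i) * proj (\<phi> i) a b)"
    and R: "\<rho> = (\<lambda>a b. \<Sum>j<M. complex_of_real (p j) * proj (\<psi> j) a b)"
  shows "ptrace_op d DS AS DS' AS' P \<rho> =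
     (\<lambda>r r'. \<Sum>i<N. \<Sum>j<M. complex_of_real (c i * p j) * proj (U d DS AS DS' AS' (\<phi> i) (\<psi> j)) r r')"
proof (intro ext)
  fix r r'
  let ?B = "basis d DS' AS'" and ?B2 = "basis d (DS - DS') (AS - AS')"
  show "ptrace_op d DS AS DS' AS' P \<rho> r r' =
     (\<Sum>i<N. \<Sum>j<M. complex_of_real (c i * p j) * proj (U d DS AS DS' AS' (\<phi> i) (\<psi> j)) r r')"
  proof (cases "r \<in> ?B2 \<and> r' \<in> ?B2")
    case False then show ?thesis unfolding ptrace_op_def proj_def U_def by auto
  next
    case True
    let ?T = "\<lambda>a b i j. complex_of_real (c i * p j) * ((cnj (\<phi> i b) * \<psi> j (join DS' AS' b r)) *
                 (\<phi> i a * cnj (\<psi> j (join DS' AS' a r'))))"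
    have "ptrace_op d DS AS DS' AS' P \<rho> r r' = (\<Sum>a\<in>?B. \<Sum>b\<in>?B. \<Sum>i<N. \<Sum>j<M. ?T a b i j)"
      unfolding ptrace_op_def using True
      by (simp add: P R proj_def sum_product algebra_simps)
    also have "\<dots> = (\<Sum>i<N. \<Sum>j<M. \<Sum>b\<in>?B. \<Sum>a\<in>?B. ?T a b i j)" by (rule swap4)
    also have "\<dots> = (\<Sum>i<N. \<Sum>j<M. complex_of_real (c i * p j) * proj (U d DS AS DS' AS' (\<phi> i) (\<psi> j)) r r')"
      using True unfolding proj_def U_def
      by (simp add: cnj_sum sum_distrib_left sum_distrib_right mult_ac)
    finally show ?thesis .
  qed
qed



lemma delta_structured:
  assumes "a \<in> basis d DS AS"
  shows "structured d DS AS (\<lambda>b. if b = a then 1 else 0)"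
  unfolding structured_def
proof (intro exI conjI ballI impI)
  show "gstruct isl (nodes DS AS) {} id" unfolding gstruct_def by simp
  fix c assume "c \<in> basis d DS AS" "(if c = a then 1 else 0 :: complex) \<noteq> 0"
  then have "c = a" by (simp split: if_splits)
  then show "gsat d (nodes DS AS) {} id (\<lambda>_. 0) (val a) (val c)" unfolding gsat_def by simp
qed

lemma U_delta:
  assumes "a \<in> basis d DS' AS'" and fin: "finite DS'" "finite AS'"
  shows "U d DS AS DS' AS' (\<lambda>b. if b = a then 1 else 0) \<psi> =
     (\<lambda>r. if r \<in> basis d (DS - DS') (AS - AS') then \<psi> (join DS' AS' a r) else 0)"
proof -
  have eq: "\<And>r. (\<Sum>b\<in>basis d DS' AS'. cnj (if b = a then 1 else 0) * \<psi> (join DS' AS' b r)) = \<psi> (join DS' AS' a r)"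
  proof -
    fix r
    have "(\<Sum>b\<in>basis d DS' AS'. cnj (if b = a then 1 else 0) * \<psi> (join DS' AS' b r)) =
          (\<Sum>b\<in>basis d DS' AS'. if b = a then \<psi> (join DS' AS' b r) else 0)"
      by (rule sum.cong) auto
    also have "\<dots> = \<psi> (join DS' AS' a r)" using assms finite_basis[OF fin] by (simp add: sum.delta)
    finally show "?thesis r" .
  qed
  show ?thesis unfolding U_def by (rule ext, subst eq, rule refl)
qed

lemma ptrace_id:
  assumes fin: "finite DS'" "finite AS'" and R: "\<rho> = (\<lambda>a b. \<Sum>j<M. complex_of_real (p j) * proj (\<psi> j) a b)"
  shows "ptrace_op d DS AS DS' AS' (id_op d DS' AS') \<rho> =
     (\<lambda>r r'. \<Sum>a\<in>basis d DS' AS'. \<Sum>j<M. complex_of_real (p j) *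
         proj (U d DS AS DS' AS' (\<lambda>b. if b = a then 1 else 0) (\<psi> j)) r r')"
proof (intro ext)
  fix r r'
  let ?B = "basis d DS' AS'" and ?B2 = "basis d (DS - DS') (AS - AS')"
  show "ptrace_op d DS AS DS' AS' (id_op d DS' AS') \<rho> r r' =
     (\<Sum>a\<in>?B. \<Sum>j<M. complex_of_real (p j) * proj (U d DS AS DS' AS' (\<lambda>b. if b = a then 1 else 0) (\<psi> j)) r r')"
  proof (cases "r \<in> ?B2 \<and> r' \<in> ?B2")
    case False
    have "\<And>a. a \<in> ?B \<Longrightarrow> (\<Sum>j<M. complex_of_real (p j) * proj (U d DS AS DS' AS' (\<lambda>b. if b = a then 1 else 0) (\<psi> j)) r r') = 0"
      using False by (auto simp: U_delta[OF _ fin] proj_def)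
    moreover have "ptrace_op d DS AS DS' AS' (id_op d DS' AS') \<rho> r r' = 0"
      unfolding ptrace_op_def using False by auto
    ultimately show ?thesis by (simp add: sum.neutral)
  next
    case True
    have "ptrace_op d DS AS DS' AS' (id_op d DS' AS') \<rho> r r' = (\<Sum>a\<in>?B. \<rho> (join DS' AS' a r) (join DS' AS' a r'))"
    proof -
      have "\<And>a. a \<in> ?B \<Longrightarrow> (\<Sum>b\<in>?B. id_op d DS' AS' a b * \<rho> (join DS' AS' b r) (join DS' AS' a r'))
          = \<rho> (join DS' AS' a r) (join DS' AS' a r')"
      proof -
        fix a assume a: "a \<in> ?B"
        have "(\<Sum>b\<in>?B. id_op d DS' AS' a b * \<rho> (join DS' AS' b r) (join DS' AS' a r')) =
              (\<Sum>b\<in>?B. if a = b then \<rho> (join DS' AS' b r) (join DS' AS' a r') else 0)"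
          by (rule sum.cong) (auto simp: id_op_def a)
        also have "\<dots> = \<rho> (join DS' AS' a r) (join DS' AS' a r')" using a finite_basis[OF fin] by (simp add: sum.delta')
        finally show "?thesis a" .
      qed
      then show ?thesis using True unfolding ptrace_op_def by simp
    qed
    also have "\<dots> = (\<Sum>a\<in>?B. \<Sum>j<M. complex_of_real (p j) * proj (U d DS AS DS' AS' (\<lambda>b. if b = a then 1 else 0) (\<psi> j)) r r')"
      by (rule sum.cong) (auto simp: U_delta[OF _ fin] True R proj_def)
    finally show ?thesis .
  qed
qed

lemma join_bij:
  assumes "DS' \<subseteq> DS" "AS' \<subseteq> AS"
  shows "bij_betw (\<lambda>(r, a). join DS' AS' a r) (basis d (DS - DS') (AS - AS') \<times> basis d DS' AS') (basis d DS AS)"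
proof (rule bij_betw_imageI)
  show "inj_on (\<lambda>(r, a). join DS' AS' a r) (basis d (DS - DS') (AS - AS') \<times> basis d DS' AS')"
  proof (rule inj_onI)
    fix x y assume xm: "x \<in> basis d (DS - DS') (AS - AS') \<times> basis d DS' AS'"
      and ym: "y \<in> basis d (DS - DS') (AS - AS') \<times> basis d DS' AS'"
      and exy: "(\<lambda>(r, a). join DS' AS' a r) x = (\<lambda>(r, a). join DS' AS' a r) y"
    obtain r1 r2 a1 a2 where xe: "x = ((r1, r2), (a1, a2))" by (metis prod.exhaust)
    obtain r1' r2' a1' a2' where ye: "y = ((r1', r2'), (a1', a2'))" by (metis prod.exhaust)
    have m: "(r1, r2) \<in> basis d (DS - DS') (AS - AS')" "(a1, a2) \<in> basis d DS' AS'"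
      "(r1', r2') \<in> basis d (DS - DS') (AS - AS')" "(a1', a2') \<in> basis d DS' AS'"
      using xm ym xe ye by auto
    have e: "join DS' AS' (a1, a2) (r1, r2) = join DS' AS' (a1', a2') (r1', r2')" using exy xe ye by simp
    have e1: "\<And>i. (if i \<in> DS' then a1 i else r1 i) = (if i \<in> DS' then a1' i else r1' i)"
    proof -
      fix i show "?thesis i" using arg_cong[OF e, of "\<lambda>c. fst c i"] unfolding join_def by (auto split: if_splits)
    qed
    have e2: "\<And>j. (if j \<in> AS' then a2 j else r2 j) = (if j \<in> AS' then a2' j else r2' j)"
    proof -
      fix j show "?thesis j" using arg_cong[OF e, of "\<lambda>c. snd c j"] unfolding join_def by (auto split: if_splits)
    qed
    have x: "a1 \<in> extensional DS'" "a1' \<in> extensional DS'" "a2 \<in> extensional AS'" "a2' \<in> extensional AS'"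
      "r1 \<in> extensional (DS - DS')" "r1' \<in> extensional (DS - DS')"
      "r2 \<in> extensional (AS - AS')" "r2' \<in> extensional (AS - AS')"
      using m unfolding basis_def by (auto simp: PiE_iff)
    have "a1 = a1'"
    proof
      fix i show "a1 i = a1' i" using e1[of i] x(1,2) by (cases "i \<in> DS'") (auto simp: extensional_def)
    qed
    moreover have "a2 = a2'"
    proof
      fix i show "a2 i = a2' i" using e2[of i] x(3,4) by (cases "i \<in> AS'") (auto simp: extensional_def)
    qed
    moreover have "r1 = r1'"
    proof
      fix i show "r1 i = r1' i" using e1[of i] x(5,6) by (cases "i \<in> DS'") (auto simp: extensional_def)
    qed
    moreover have "r2 = r2'"
    proof
      fix i show "r2 i = r2' i" using e2[of i] x(7,8) by (cases "i \<in> AS'") (auto simp: extensional_def)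
    qed
    ultimately show "x = y" using xe ye by simp
  qed
  show "(\<lambda>(r, a). join DS' AS' a r) ` (basis d (DS - DS') (AS - AS') \<times> basis d DS' AS') = basis d DS AS"
  proof
    show "(\<lambda>(r, a). join DS' AS' a r) ` (basis d (DS - DS') (AS - AS') \<times> basis d DS' AS') \<subseteq> basis d DS AS"
      using join_basis[OF _ _ assms] by auto
    show "basis d DS AS \<subseteq> (\<lambda>(r, a). join DS' AS' a r) ` (basis d (DS - DS') (AS - AS') \<times> basis d DS' AS')"
    proof
      fix c assume c: "c \<in> basis d DS AS"
      obtain f g where fg: "c = (f, g)" by fastforce
      have f: "f \<in> PiE DS (\<lambda>_. {..<d})" and g: "g \<in> PiE AS (\<lambda>_. {..<d})" using c fg basis_def by auto
      let ?a = "(restrict f DS', restrict g AS')" and ?r = "(restrict f (DS - DS'), restrict g (AS - AS'))"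
      have "?a \<in> basis d DS' AS'" using f g assms unfolding basis_def by (auto simp: PiE_iff)
      moreover have "?r \<in> basis d (DS - DS') (AS - AS')" using f g unfolding basis_def by (auto simp: PiE_iff)
      moreover have "join DS' AS' ?a ?r = c"
      proof -
        have "(\<lambda>i. if i \<in> DS' then restrict f DS' i else restrict f (DS - DS') i) = f"
        proof
          fix i show "(if i \<in> DS' then restrict f DS' i else restrict f (DS - DS') i) = f i"
            using f assms by (cases "i \<in> DS") (auto simp: PiE_iff extensional_def)
        qed
        moreover have "(\<lambda>j. if j \<in> AS' then restrict g AS' j else restrict g (AS - AS') j) = g"
        proof
          fix j show "(if j \<in> AS' then restrict g AS' j else restrict g (AS - AS') j) = g j"
            using g assms by (cases "j \<in> AS") (auto simp: PiE_iff extensional_def)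
        qed
        ultimately show ?thesis unfolding join_def fg by (simp cong: if_cong)
      qed
      ultimately show "c \<in> (\<lambda>(r, a). join DS' AS' a r) ` (basis d (DS - DS') (AS - AS') \<times> basis d DS' AS')"
        by force
    qed
  qed
qed

lemma sum_join:
  assumes "DS' \<subseteq> DS" "AS' \<subseteq> AS"
  shows "(\<Sum>r\<in>basis d (DS - DS') (AS - AS'). \<Sum>a\<in>basis d DS' AS'. F (join DS' AS' a r)) = (\<Sum>c\<in>basis d DS AS. F c)"
proof -
  have b: "bij_betw (\<lambda>(r, a). join DS' AS' a r) (basis d (DS - DS') (AS - AS') \<times> basis d DS' AS') (basis d DS AS)"
    using join_bij[OF assms] .
  have "(\<Sum>r\<in>basis d (DS - DS') (AS - AS'). \<Sum>a\<in>basis d DS' AS'. F (join DS' AS' a r)) =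
        (\<Sum>(r, a)\<in>basis d (DS - DS') (AS - AS') \<times> basis d DS' AS'. F (join DS' AS' a r))"
    by (rule sum.cartesian_product)
  also have "\<dots> = (\<Sum>c\<in>basis d DS AS. F c)"
    using sum.reindex_bij_betw[OF b, of F] by (simp add: case_prod_beta')
  finally show ?thesis .
qed

lemma valid_trace:
  assumes "valid_state d DS AS \<rho>"
  shows "(\<Sum>c\<in>basis d DS AS. \<rho> c c) = 1"
proof -
  obtain N :: nat and p \<psi> where h: "\<forall>i<N. 0 \<le> p i \<and> pure_state d DS AS (\<psi> i)"
    and s: "(\<Sum>i<N. p i) = 1" and e: "\<rho> = (\<lambda>a b. \<Sum>i<N. complex_of_real (p i) * proj (\<psi> i) a b)"
    using assms unfolding valid_state_def by blast
  have "cone d DS AS \<rho>" unfolding cone_def using h e by blast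
  have tr: "\<And>i. i < N \<Longrightarrow> (\<Sum>r\<in>basis d DS AS. proj (\<psi> i) r r) = 1"
  proof -
    fix i assume "i < N"
    then have "unit_vec d DS AS (\<psi> i)" using h pure_state_def by auto
    then have "(\<Sum>r\<in>basis d DS AS. (cmod (\<psi> i r))\<^sup>2) = 1" unfolding unit_vec_def by simp
    then have "complex_of_real (\<Sum>r\<in>basis d DS AS. (cmod (\<psi> i r))\<^sup>2) = 1" by simp
    moreover have "(\<Sum>r\<in>basis d DS AS. proj (\<psi> i) r r) = (\<Sum>r\<in>basis d DS AS. complex_of_real ((cmod (\<psi> i r))\<^sup>2))"
      by (rule sum.cong) (simp_all only: proj_def complex_norm_square)
    ultimately show "(\<Sum>r\<in>basis d DS AS. proj (\<psi> i) r r) = 1" by (simp only: of_real_sum)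
  qed
  have "(\<Sum>r\<in>basis d DS AS. \<rho> r r) = (\<Sum>i<N. complex_of_real (p i) * (\<Sum>r\<in>basis d DS AS. proj (\<psi> i) r r))"
    unfolding e by (simp add: sum.swap[of _ "basis d DS AS"] sum_distrib_left)
  also have "\<dots> = (\<Sum>i<N. complex_of_real (p i))" using tr by simp
  also have "\<dots> = 1" using s by (simp flip: of_real_sum)
  finally show ?thesis .
qed



lemma ptrace_id_diag:
  assumes fin: "finite DS'" "finite AS'" and r: "r \<in> basis d (DS - DS') (AS - AS')"
  shows "ptrace_op d DS AS DS' AS' (id_op d DS' AS') \<rho> r r =
         (\<Sum>a\<in>basis d DS' AS'. \<rho> (join DS' AS' a r) (join DS' AS' a r))"
proof -
  let ?B = "basis d DS' AS'"
  have "\<And>a. a \<in> ?B \<Longrightarrow> (\<Sum>b\<in>?B. id_op d DS' AS' a b * \<rho> (join DS' AS' b r) (join DS' AS' a r))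
      = \<rho> (join DS' AS' a r) (join DS' AS' a r)"
  proof -
    fix a assume a: "a \<in> ?B"
    have "(\<Sum>b\<in>?B. id_op d DS' AS' a b * \<rho> (join DS' AS' b r) (join DS' AS' a r)) =
          (\<Sum>b\<in>?B. if a = b then \<rho> (join DS' AS' b r) (join DS' AS' a r) else 0)"
      by (rule sum.cong) (auto simp: id_op_def a)
    also have "\<dots> = \<rho> (join DS' AS' a r) (join DS' AS' a r)" using a finite_basis[OF fin] by (simp add: sum.delta')
    finally show "?thesis a" .
  qed
  then show ?thesis using r unfolding ptrace_op_def by simp
qed

theorem mainTheorem2:
  fixes d :: nat and DS AS DS' AS' :: "nat set" and \<rho> :: op
  assumes "d \<ge> 2"
    and "finite DS" and "finite AS"
    and "DS' \<subseteq> DS" and "AS' \<subseteq> AS"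
    and "valid_state d DS AS \<rho>"
  shows "(\<forall>Ps P. valid_measurement d DS' AS' Ps \<and> P \<in> set Ps \<longrightarrow>
            ptrace_op d DS AS DS' AS' P \<rho> = (\<lambda>_ _. 0) \<or>
            (\<exists>c::real. c > 0 \<and> (\<exists>\<tau>. valid_state d (DS - DS') (AS - AS') \<tau> \<and>
                 ptrace_op d DS AS DS' AS' P \<rho> = (\<lambda>a b. complex_of_real c * \<tau> a b))))
         \<and> valid_state d (DS - DS') (AS - AS') (ptrace_op d DS AS DS' AS' (id_op d DS' AS') \<rho>)"
proof -
  have d0: "0 < d" using assms(1) by simp
  have fin: "finite DS" "finite AS" using assms(2,3) .
  have sb: "DS' \<subseteq> DS" "AS' \<subseteq> AS" using assms(4,5) .
  have fin': "finite DS'" "finite AS'" using finite_subset[OF sb(1) fin(1)] finite_subset[OF sb(2) fin(2)] .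
  obtain M :: nat and p \<psi> where hr: "\<forall>j<M. 0 \<le> p j \<and> pure_state d DS AS (\<psi> j)"
    and ps: "(\<Sum>j<M. p j) = 1" and R: "\<rho> = (\<lambda>a b. \<Sum>j<M. complex_of_real (p j) * proj (\<psi> j) a b)"
    using assms(6) unfolding valid_state_def by blast
  have sq: "\<And>j. j < M \<Longrightarrow> structured d DS AS (\<psi> j)" using hr pure_structured by blast
  have part1: "\<forall>Ps P. valid_measurement d DS' AS' Ps \<and> P \<in> set Ps \<longrightarrow>
            ptrace_op d DS AS DS' AS' P \<rho> = (\<lambda>_ _. 0) \<or>
            (\<exists>c::real. c > 0 \<and> (\<exists>\<tau>. valid_state d (DS - DS') (AS - AS') \<tau> \<and>
                 ptrace_op d DS AS DS' AS' P \<rho> = (\<lambda>a b. complex_of_real c * \<tau> a b)))"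
  proof (intro allI impI)
    fix Ps P assume "valid_measurement d DS' AS' Ps \<and> P \<in> set Ps"
    then have "nonneg_comb_pure d DS' AS' P" unfolding valid_measurement_def by blast
    then obtain N :: nat and c \<phi> where hp: "\<forall>i<N. 0 \<le> c i \<and> pure_state d DS' AS' (\<phi> i)"
      and Pe: "P = (\<lambda>a b. \<Sum>i<N. complex_of_real (c i) * proj (\<phi> i) a b)"
      unfolding nonneg_comb_pure_def by blast
    have e: "ptrace_op d DS AS DS' AS' P \<rho> =
       (\<lambda>r r'. \<Sum>i<N. \<Sum>j<M. complex_of_real (c i * p j) * proj (U d DS AS DS' AS' (\<phi> i) (\<psi> j)) r r')"
      using ptrace_expand[OF Pe R] .
    have "cone d (DS - DS') (AS - AS') (\<lambda>r r'. \<Sum>i<N. \<Sum>j<M. complex_of_real (c i * p j) * proj (U d DS AS DS' AS' (\<phi> i) (\<psi> j)) r r')"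
    proof (rule cone_sum, simp, intro ballI)
      fix i assume i: "i \<in> {..<N}"
      show "cone d (DS - DS') (AS - AS') (\<lambda>r r'. \<Sum>j<M. complex_of_real (c i * p j) * proj (U d DS AS DS' AS' (\<phi> i) (\<psi> j)) r r')"
      proof (rule cone_sum, simp, intro ballI)
        fix j assume j: "j \<in> {..<M}"
        have sp: "structured d DS' AS' (\<phi> i)" using hp i pure_structured by auto
        have "cone d (DS - DS') (AS - AS') (proj (U d DS AS DS' AS' (\<phi> i) (\<psi> j)))"
          using cone_U[OF sp sq[of j] fin sb d0] j by simp
        moreover have "0 \<le> c i * p j" using hp hr i j by simp
        ultimately show "cone d (DS - DS') (AS - AS') (\<lambda>r r'. complex_of_real (c i * p j) * proj (U d DS AS DS' AS' (\<phi> i) (\<psi> j)) r r')"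
          using cone_scale by blast
      qed
    qed
    then show "ptrace_op d DS AS DS' AS' P \<rho> = (\<lambda>_ _. 0) \<or>
            (\<exists>c::real. c > 0 \<and> (\<exists>\<tau>. valid_state d (DS - DS') (AS - AS') \<tau> \<and>
                 ptrace_op d DS AS DS' AS' P \<rho> = (\<lambda>a b. complex_of_real c * \<tau> a b)))"
      unfolding e by (rule cone_result)
  qed
  let ?e = "\<lambda>a b. if b = a then 1 else (0::complex)"
  have e2: "ptrace_op d DS AS DS' AS' (id_op d DS' AS') \<rho> =
     (\<lambda>r r'. \<Sum>a\<in>basis d DS' AS'. \<Sum>j<M. complex_of_real (p j) * proj (U d DS AS DS' AS' (?e a) (\<psi> j)) r r')"
    using ptrace_id[OF fin' R] .
  have cn: "cone d (DS - DS') (AS - AS') (ptrace_op d DS AS DS' AS' (id_op d DS' AS') \<rho>)"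
    unfolding e2
  proof (rule cone_sum, rule finite_basis[OF fin'], intro ballI)
    fix a assume a: "a \<in> basis d DS' AS'"
    show "cone d (DS - DS') (AS - AS') (\<lambda>r r'. \<Sum>j<M. complex_of_real (p j) * proj (U d DS AS DS' AS' (?e a) (\<psi> j)) r r')"
    proof (rule cone_sum, simp, intro ballI)
      fix j assume j: "j \<in> {..<M}"
      have "cone d (DS - DS') (AS - AS') (proj (U d DS AS DS' AS' (?e a) (\<psi> j)))"
        using cone_U[OF delta_structured[OF a] sq[of j] fin sb d0] j by simp
      moreover have "0 \<le> p j" using hr j by simp
      ultimately show "cone d (DS - DS') (AS - AS') (\<lambda>r r'. complex_of_real (p j) * proj (U d DS AS DS' AS' (?e a) (\<psi> j)) r r')"
        using cone_scale by blast
    qed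
  qed
  have "(\<Sum>r\<in>basis d (DS - DS') (AS - AS'). ptrace_op d DS AS DS' AS' (id_op d DS' AS') \<rho> r r) =
        (\<Sum>r\<in>basis d (DS - DS') (AS - AS'). \<Sum>a\<in>basis d DS' AS'. \<rho> (join DS' AS' a r) (join DS' AS' a r))"
    by (rule sum.cong) (simp_all add: ptrace_id_diag[OF fin'])
  also have "\<dots> = (\<Sum>c\<in>basis d DS AS. \<rho> c c)" using sum_join[OF sb, where F="\<lambda>c. \<rho> c c" and d=d] by simp
  also have "\<dots> = 1" using valid_trace[OF assms(6)] .
  finally have "valid_state d (DS - DS') (AS - AS') (ptrace_op d DS AS DS' AS' (id_op d DS' AS') \<rho>)"
    using cone_trace[OF cn] by simp
  then show ?thesis using part1 by simp
qed


end
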